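(* Let $S$ be a Rauzy scheme for a recurrent infinite word $W$, let $l$ be an admissible path in $S$ with $F(l)=u$, and let $u_1$ be a finite word with $uu_1\sqsubseteq W$. Then there is an admissible path $l'$ in $S$ such that $l$ is a prefix of $l'$ and $F(l')$ begins with $uu_1$. Symmetrically, if $u_1u\sqsubseteq W$, there is an admissible path $l'$ such that $l$ is a suffix of $l'$ and $F(l')$ ends with $u_1u$.
   Context: An infinite word $W$ is recurrent if every factor occurs infinitely often. $u\sqsubseteq w$: $u$ is a factor of $w$; $u\sqsubseteq_k w$: $u$ occurs in $w$ at least $k$ times. A graph with words is a strongly connected finite directed graph (multiple edges and loops allowed) in which every edge $e$ carries a front word $F(e)$ and a back word $B(e)$, and every vertex either has in-degree $1$ and out-degree $>1$ (distributing vertex) or in-degree $>1$ and out-degree $1$ (collecting vertex). A path is a finite nonempty sequence of edges $v_1\dots v_n$ with each $v_{i+1}$ starting where $v_i$ ends; subpaths, prefixes, suffixes and $s_1\sqsubseteq_k s_2$ are defined via edge records (the word $v_1\dots v_n$ over the alphabet of edges). A path is symmetric if its first edge starts at a collecting vertex and its last edge ends at a distributing vertex. For $s=v_1\dots v_n$, $F(s)$ is the concatenation, in order, of the front words of $v_1$ and of all $v_i$ ($i\ge2$) starting at a distributing vertex; $B(s)$ is the concatenation, in order, of the back words of all $v_i$ ($i\le n-1$) ending at a collecting vertex and of $v_n$. A Rauzy scheme for $W$ is a graph with words such that: (1) it has more than one edge; (2) front words of edges leaving a common distributing vertex have pairwise distinct first letters, and back words of edges entering a common collecting vertex have pairwise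 distinct last letters; (3) $F(s)=B(s)$ for every symmetric path $s$; (4) for symmetric paths $s_1,s_2$ and $k\ge1$, $F(s_1)\sqsubseteq_k F(s_2)$ implies $s_1\sqsubseteq_k s_2$; (5) all words on edges are factors of $W$; (6) every factor of $W$ is a factor of $F(s)$ for some symmetric path $s$; (7) for every edge $e$ there is a factor $u_e$ of $W$ such that every symmetric path $s$ with $u_e\sqsubseteq F(s)$ passes through $e$. A symmetric path $s$ is admissible if $F(s)\sqsubseteq W$. *)

theory Defs
  imports Main "HOL-Library.Sublist"
begin

definition factor_inf :: "'a list \<Rightarrow> (nat \<Rightarrow> 'a) \<Rightarrow> bool" where
  "factor_inf u W \<longleftrightarrow> (\<exists>i. u = map W [i..<i + length u])"

definition recurrent :: "(nat \<Rightarrow> 'a) \<Rightarrow> bool" where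
  "recurrent W \<longleftrightarrow>
     (\<forall>u. factor_inf u W \<longrightarrow> infinite {i. map W [i..<i + length u] = u})"

definition occ_count :: "'a list \<Rightarrow> 'a list \<Rightarrow> nat" where
  "occ_count u w = card {i. i + length u \<le> length w \<and> take (length u) (drop i w) = u}"

text \<open>A graph is given by a vertex set V, an edge set E (edges are abstract, so multiple
  edges and loops are allowed), source/target maps src, tgt, and front/back words fr, bk.\<close>

definition indeg :: "'e set \<Rightarrow> ('e \<Rightarrow> 'v) \<Rightarrow> 'v \<Rightarrow> nat" where
  "indeg E tgt v = card {e\<in>E. tgt e = v}"

definition outdeg :: "'e set \<Rightarrow> ('e \<Rightarrow> 'v) \<Rightarrow> 'v \<Rightarrow> nat" where
  "outdeg E src v = card {e\<in>E. src e = v}"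

definition distributing :: "'e set \<Rightarrow> ('e \<Rightarrow> 'v) \<Rightarrow> ('e \<Rightarrow> 'v) \<Rightarrow> 'v \<Rightarrow> bool" where
  "distributing E src tgt v \<longleftrightarrow> indeg E tgt v = 1 \<and> outdeg E src v > 1"

definition collecting :: "'e set \<Rightarrow> ('e \<Rightarrow> 'v) \<Rightarrow> ('e \<Rightarrow> 'v) \<Rightarrow> 'v \<Rightarrow> bool" where
  "collecting E src tgt v \<longleftrightarrow> indeg E tgt v > 1 \<and> outdeg E src v = 1"

definition graph_with_words ::
  "'v set \<Rightarrow> 'e set \<Rightarrow> ('e \<Rightarrow> 'v) \<Rightarrow> ('e \<Rightarrow> 'v) \<Rightarrow> bool" where
  "graph_with_words V E src tgt \<longleftrightarrow>
     finite V \<and> finite E \<and>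
     (\<forall>e\<in>E. src e \<in> V \<and> tgt e \<in> V) \<and>
     (\<forall>v\<in>V. \<forall>w\<in>V. (v, w) \<in> {(src e, tgt e) | e. e \<in> E}\<^sup>*) \<and>
     (\<forall>v\<in>V. distributing E src tgt v \<or> collecting E src tgt v)"

definition is_path :: "'e set \<Rightarrow> ('e \<Rightarrow> 'v) \<Rightarrow> ('e \<Rightarrow> 'v) \<Rightarrow> 'e list \<Rightarrow> bool" where
  "is_path E src tgt s \<longleftrightarrow>
     s \<noteq> [] \<and> set s \<subseteq> E \<and> (\<forall>i. Suc i < length s \<longrightarrow> tgt (s ! i) = src (s ! Suc i))"

definition symmetric_path :: "'e set \<Rightarrow> ('e \<Rightarrow> 'v) \<Rightarrow> ('e \<Rightarrow> 'v) \<Rightarrow> 'e list \<Rightarrow> bool" where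
  "symmetric_path E src tgt s \<longleftrightarrow>
     is_path E src tgt s \<and> collecting E src tgt (src (hd s)) \<and>
     distributing E src tgt (tgt (last s))"

definition Fw :: "'e set \<Rightarrow> ('e \<Rightarrow> 'v) \<Rightarrow> ('e \<Rightarrow> 'v) \<Rightarrow> ('e \<Rightarrow> 'a list) \<Rightarrow> 'e list \<Rightarrow> 'a list" where
  "Fw E src tgt fr s =
     fr (hd s) @ concat (map fr (filter (\<lambda>e. distributing E src tgt (src e)) (tl s)))"

definition Bw :: "'e set \<Rightarrow> ('e \<Rightarrow> 'v) \<Rightarrow> ('e \<Rightarrow> 'v) \<Rightarrow> ('e \<Rightarrow> 'a list) \<Rightarrow> 'e list \<Rightarrow> 'a list" where
  "Bw E src tgt bk s =
     concat (map bk (filter (\<lambda>e. collecting E src tgt (tgt e)) (butlast s))) @ bk (last s)"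

definition rauzy_scheme ::
  "(nat \<Rightarrow> 'a) \<Rightarrow> 'v set \<Rightarrow> 'e set \<Rightarrow> ('e \<Rightarrow> 'v) \<Rightarrow> ('e \<Rightarrow> 'v)
     \<Rightarrow> ('e \<Rightarrow> 'a list) \<Rightarrow> ('e \<Rightarrow> 'a list) \<Rightarrow> bool" where
  "rauzy_scheme W V E src tgt fr bk \<longleftrightarrow>
     graph_with_words V E src tgt \<and>
     \<comment> \<open>(1)\<close>
     card E > 1 \<and>
     \<comment> \<open>(2)\<close>
     (\<forall>e\<in>E. \<forall>e'\<in>E. e \<noteq> e' \<and> src e = src e' \<and> distributing E src tgt (src e) \<longrightarrow>
        fr e \<noteq> [] \<and> fr e' \<noteq> [] \<and> hd (fr e) \<noteq> hd (fr e')) \<and>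
     (\<forall>e\<in>E. \<forall>e'\<in>E. e \<noteq> e' \<and> tgt e = tgt e' \<and> collecting E src tgt (tgt e) \<longrightarrow>
        bk e \<noteq> [] \<and> bk e' \<noteq> [] \<and> last (bk e) \<noteq> last (bk e')) \<and>
     \<comment> \<open>(3)\<close>
     (\<forall>s. symmetric_path E src tgt s \<longrightarrow> Fw E src tgt fr s = Bw E src tgt bk s) \<and>
     \<comment> \<open>(4)\<close>
     (\<forall>s1 s2 k. symmetric_path E src tgt s1 \<and> symmetric_path E src tgt s2 \<and> k \<ge> 1 \<and>
        occ_count (Fw E src tgt fr s1) (Fw E src tgt fr s2) \<ge> k \<longrightarrow> occ_count s1 s2 \<ge> k) \<and>
     \<comment> \<open>(5)\<close>
     (\<forall>e\<in>E. factor_inf (fr e) W \<and> factor_inf (bk e) W) \<and>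
     \<comment> \<open>(6)\<close>
     (\<forall>u. factor_inf u W \<longrightarrow>
        (\<exists>s. symmetric_path E src tgt s \<and> sublist u (Fw E src tgt fr s))) \<and>
     \<comment> \<open>(7)\<close>
     (\<forall>e\<in>E. \<exists>ue. factor_inf ue W \<and>
        (\<forall>s. symmetric_path E src tgt s \<and> sublist ue (Fw E src tgt fr s) \<longrightarrow> e \<in> set s))"

definition admissible ::
  "(nat \<Rightarrow> 'a) \<Rightarrow> 'e set \<Rightarrow> ('e \<Rightarrow> 'v) \<Rightarrow> ('e \<Rightarrow> 'v) \<Rightarrow> ('e \<Rightarrow> 'a list) \<Rightarrow> 'e list \<Rightarrow> bool" where
  "admissible W E src tgt fr s \<longleftrightarrow>
     symmetric_path E src tgt s \<and> factor_inf (Fw E src tgt fr s) W"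

end

theory Submission
  imports Defs "HOL-Library.Infinite_Set"
begin


definition occs :: "'a list \<Rightarrow> 'a list \<Rightarrow> nat set" where
  "occs u w = {i. i + length u \<le> length w \<and> take (length u) (drop i w) = u}"

lemma occ_count_occs: "occ_count u w = card (occs u w)"
  by (simp add: occ_count_def occs_def)

lemma finite_occs: "finite (occs u w)"
proof -
  have "occs u w \<subseteq> {..length w}" unfolding occs_def by auto
  thus ?thesis using finite_subset by blast
qed

lemma occs_append: "length a \<in> occs u (a @ u @ b)"
  by (simp add: occs_def)

lemma occsD: assumes "i \<in> occs u w" shows "w = take i w @ u @ drop (i + length u) w"
proof -
  have "drop i w = take (length u) (drop i w) @ drop (length u) (drop i w)" by (rule append_take_drop_id[symmetric])
  also have "\<dots> = u @ drop (i + length u) w" using assms by (simp add: occs_def add.commute)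
  finally show ?thesis by (metis append_take_drop_id)
qed

lemma factor_inf_nth: "factor_inf u W \<longleftrightarrow> (\<exists>i. \<forall>k<length u. u ! k = W (i + k))"
proof
  assume "factor_inf u W"
  then obtain i where "u = map W [i..<i + length u]" unfolding factor_inf_def by blast
  hence "\<forall>k<length u. u ! k = W (i + k)" by (metis add_diff_cancel_left' length_map length_upt nth_map_upt)
  thus "\<exists>i. \<forall>k<length u. u ! k = W (i + k)" by blast
next
  assume "\<exists>i. \<forall>k<length u. u ! k = W (i + k)"
  then obtain i where h: "\<forall>k<length u. u ! k = W (i + k)" by blast
  have "u = map W [i..<i + length u]" by (rule nth_equalityI) (auto simp: h)
  thus "factor_inf u W" unfolding factor_inf_def by blast
qed

lemma factor_inf_sublist: assumes "sublist a b" "factor_inf b W" shows "factor_inf a W"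
proof -
  obtain x y where b: "b = x @ a @ y" using assms(1) unfolding sublist_def by blast
  obtain i where h: "\<forall>k<length b. b ! k = W (i + k)" using assms(2) factor_inf_nth by blast
  have "\<forall>k<length a. a ! k = W (i + length x + k)"
  proof (intro allI impI)
    fix k assume "k < length a"
    hence "b ! (length x + k) = a ! k" by (simp add: b nth_append)
    moreover have "length x + k < length b" using \<open>k < length a\<close> b by simp
    ultimately show "a ! k = W (i + length x + k)" using h by (metis add.assoc)
  qed
  thus ?thesis using factor_inf_nth by blast
qed

lemma step_lemma:
  fixes f :: "nat \<Rightarrow> nat"
  assumes "D N" "T \<le> f N" "f 0 \<le> T"
    and st: "\<And>k. k < N \<Longrightarrow> f k \<le> f (Suc k) \<and> f (Suc k) \<le> f k + M"
    and nd: "\<And>k. k < N \<Longrightarrow> \<not> D k \<Longrightarrow> f (Suc k) = f k"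
  shows "\<exists>k\<le>N. D k \<and> T \<le> f k \<and> f k \<le> T + M"
proof -
  define k0 where "k0 = (LEAST k. T \<le> f k)"
  have k0N: "k0 \<le> N" unfolding k0_def using assms(2) by (rule Least_le)
  have Tk0: "T \<le> f k0" unfolding k0_def using assms(2) by (rule LeastI)
  have k0M: "f k0 \<le> T + M"
  proof (cases k0)
    case 0 thus ?thesis using assms(3) by simp
  next
    case (Suc m)
    have "\<not> T \<le> f m" unfolding k0_def by (rule not_less_Least) (simp add: Suc k0_def[symmetric])
    moreover have "m < N" using Suc k0N by simp
    ultimately show ?thesis using st[of m] Suc by simp
  qed
  define k1 where "k1 = (LEAST k. k0 \<le> k \<and> D k)"
  have h1: "k0 \<le> k1 \<and> D k1" unfolding k1_def by (rule LeastI[of _ N]) (simp add: k0N assms(1))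
  have k1N: "k1 \<le> N" unfolding k1_def by (rule Least_le) (simp add: k0N assms(1))
  have "\<forall>d. k0 + d \<le> k1 \<longrightarrow> f (k0 + d) = f k0"
  proof
    fix d show "k0 + d \<le> k1 \<longrightarrow> f (k0 + d) = f k0"
    proof (induction d)
      case 0 thus ?case by simp
    next
      case (Suc d)
      show ?case
      proof
        assume a: "k0 + Suc d \<le> k1"
        have "\<not> (k0 \<le> k0 + d \<and> D (k0 + d))" unfolding k1_def
          by (rule not_less_Least) (use a k1_def in simp)
        hence "\<not> D (k0 + d)" by simp
        moreover have "k0 + d < N" using a k1N by simp
        ultimately have "f (Suc (k0 + d)) = f (k0 + d)" using nd by blast
        thus "f (k0 + Suc d) = f k0" using Suc a by simp
      qed
    qed
  qed
  hence "f k1 = f k0" using h1 by (metis le_add_diff_inverse order_refl)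
  thus ?thesis using h1 k1N Tk0 k0M by auto
qed



definition Gw :: "'e set \<Rightarrow> ('e \<Rightarrow> 'v) \<Rightarrow> ('e \<Rightarrow> 'v) \<Rightarrow> ('e \<Rightarrow> 'a list) \<Rightarrow> 'e list \<Rightarrow> 'a list" where
  "Gw E src tgt fr x = concat (map fr (filter (\<lambda>e. distributing E src tgt (src e)) x))"

definition Hw :: "'e set \<Rightarrow> ('e \<Rightarrow> 'v) \<Rightarrow> ('e \<Rightarrow> 'v) \<Rightarrow> ('e \<Rightarrow> 'a list) \<Rightarrow> 'e list \<Rightarrow> 'a list" where
  "Hw E src tgt bk x = concat (map bk (filter (\<lambda>e. collecting E src tgt (tgt e)) x))"

lemma Gw_append[simp]: "Gw E src tgt fr (a @ b) = Gw E src tgt fr a @ Gw E src tgt fr b"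
  by (simp add: Gw_def)
lemma Hw_append[simp]: "Hw E src tgt bk (a @ b) = Hw E src tgt bk a @ Hw E src tgt bk b"
  by (simp add: Hw_def)
lemma Gw_simps[simp]: "Gw E src tgt fr [] = []"
  "Gw E src tgt fr (e # x) = (if distributing E src tgt (src e) then fr e else []) @ Gw E src tgt fr x"
  by (simp_all add: Gw_def)
lemma Hw_simps[simp]: "Hw E src tgt bk [] = []"
  "Hw E src tgt bk (e # x) = (if collecting E src tgt (tgt e) then bk e else []) @ Hw E src tgt bk x"
  by (simp_all add: Hw_def)

lemma Fw_append: "a \<noteq> [] \<Longrightarrow> Fw E src tgt fr (a @ b) = Fw E src tgt fr a @ Gw E src tgt fr b"
  by (cases a) (simp_all add: Fw_def Gw_def)

lemma Bw_append: "b \<noteq> [] \<Longrightarrow> Bw E src tgt bk (a @ b) = Hw E src tgt bk a @ Bw E src tgt bk b"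
  by (simp add: Bw_def Hw_def butlast_append)

lemma is_path_take: "is_path E src tgt s \<Longrightarrow> 0 < n \<Longrightarrow> is_path E src tgt (take n s)"
  unfolding is_path_def using set_take_subset by (fastforce simp: nth_take)

lemma is_path_drop: "is_path E src tgt s \<Longrightarrow> n < length s \<Longrightarrow> is_path E src tgt (drop n s)"
  unfolding is_path_def using set_drop_subset by (fastforce simp: nth_drop)

lemma bk_ne:
  assumes RS: "rauzy_scheme W V E src tgt fr bk" and e: "e \<in> E" and c: "collecting E src tgt (tgt e)"
  shows "bk e \<noteq> []"
proof -
  have fin: "finite E" using RS unfolding rauzy_scheme_def graph_with_words_def by blast
  have "1 < card {e'\<in>E. tgt e' = tgt e}" using c unfolding collecting_def indeg_def by blast
  then obtain e' where e': "e' \<in> E" "tgt e' = tgt e" "e' \<noteq> e"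
  proof -
    assume h: "\<And>e'. e' \<in> E \<Longrightarrow> tgt e' = tgt e \<Longrightarrow> e' \<noteq> e \<Longrightarrow> thesis"
    assume c1: "1 < card {e'\<in>E. tgt e' = tgt e}"
    show thesis
    proof (rule ccontr)
      assume "\<not> thesis"
      hence "{e'\<in>E. tgt e' = tgt e} \<subseteq> {e}" using h by blast
      hence "card {e'\<in>E. tgt e' = tgt e} \<le> card {e}" by (rule card_mono[rotated]) simp
      thus False using c1 by simp
    qed
  qed
  thus ?thesis using RS e c unfolding rauzy_scheme_def by metis
qed

lemma FB:
  assumes "rauzy_scheme W V E src tgt fr bk" "symmetric_path E src tgt s"
  shows "Fw E src tgt fr s = Bw E src tgt bk s"
  using assms unfolding rauzy_scheme_def by blast

lemma decomp:
  assumes RS: "rauzy_scheme W V E src tgt fr bk"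
    and sl: "symmetric_path E src tgt l" and ss: "symmetric_path E src tgt s"
    and i: "i \<in> occs l s"
  shows "Fw E src tgt fr s = Hw E src tgt bk (take i s) @ Fw E src tgt fr l
           @ Gw E src tgt fr (drop (i + length l) s)"
proof -
  have lne: "l \<noteq> []" using sl unfolding symmetric_path_def is_path_def by blast
  have sd: "s = take i s @ l @ drop (i + length l) s" using occsD[OF i] .
  show ?thesis
  proof (cases "take i s = []")
    case True
    hence "s = l @ drop (i + length l) s" using sd by (metis append_Nil)
    hence "Fw E src tgt fr s = Fw E src tgt fr l @ Gw E src tgt fr (drop (i + length l) s)"
      using Fw_append[OF lne] by metis
    thus ?thesis using True by (metis Hw_simps(1) append_Nil)
  next
    case False
    let ?p = "take i s"
    have pl: "?p @ l = take (i + length l) s" using i by (simp add: take_add occs_def)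
    have sps: "s = (?p @ l) @ drop (i + length l) s" using sd by simp
    have ps: "is_path E src tgt (?p @ l)" unfolding pl
      using ss lne by (intro is_path_take) (auto simp: symmetric_path_def)
    have "hd (?p @ l) = hd s" using False sps by (metis hd_append2 hd_append append_is_Nil_conv)
    moreover have "last (?p @ l) = last l" using lne by simp
    ultimately have sym: "symmetric_path E src tgt (?p @ l)"
      using ps ss sl unfolding symmetric_path_def by simp
    have "Fw E src tgt fr s = Fw E src tgt fr (?p @ l) @ Gw E src tgt fr (drop (i + length l) s)"
      using Fw_append[of "?p @ l"] sps lne by (metis append_is_Nil_conv)
    also have "Fw E src tgt fr (?p @ l) = Bw E src tgt bk (?p @ l)" using FB[OF RS sym] .
    also have "\<dots> = Hw E src tgt bk ?p @ Bw E src tgt bk l" using Bw_append[OF lne] .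
    also have "Bw E src tgt bk l = Fw E src tgt fr l" using FB[OF RS sl] by simp
    finally show ?thesis by simp
  qed
qed



lemma align:
  assumes RS: "rauzy_scheme W V E src tgt fr bk"
    and sl: "symmetric_path E src tgt l" and ss: "symmetric_path E src tgt s"
    and j: "j \<in> occs (Fw E src tgt fr l) (Fw E src tgt fr s)"
  shows "\<exists>i\<in>occs l s. length (Hw E src tgt bk (take i s)) = j"
proof -
  define h where "h = (\<lambda>i. length (Hw E src tgt bk (take i s)))"
  have lne: "l \<noteq> []" using sl unfolding symmetric_path_def is_path_def by blast
  have img: "h ` occs l s \<subseteq> occs (Fw E src tgt fr l) (Fw E src tgt fr s)"
  proof
    fix x assume "x \<in> h ` occs l s"
    then obtain i where i: "i \<in> occs l s" "x = h i" by blast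
    show "x \<in> occs (Fw E src tgt fr l) (Fw E src tgt fr s)"
      unfolding i(2) h_def decomp[OF RS sl ss i(1)] by (rule occs_append)
  qed
  have mono: "h i \<le> h i'" if "i \<le> i'" for i i'
  proof -
    have "take i' s = take i s @ take (i' - i) (drop i s)" using that
      by (metis le_add_diff_inverse take_add)
    thus ?thesis unfolding h_def by (metis Hw_append length_append le_add1)
  qed
  have strict: "h i < h i'" if a: "i \<in> occs l s" "i' \<in> occs l s" "i < i'" for i i'
  proof -
    obtain m where m: "i' = Suc m" using a(3) by (cases i') auto
    have i'l: "i' + length l \<le> length s" "take (length l) (drop i' s) = l"
      using a(2) unfolding occs_def by auto
    have ms: "Suc m < length s" using i'l(1) lne m by (cases l) auto
    have "take i' s = take m s @ [s ! m]" using ms m by (simp add: take_Suc_conv_app_nth)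
    have ps: "is_path E src tgt s" using ss unfolding symmetric_path_def by blast
    hence t: "tgt (s ! m) = src (s ! Suc m)" using ms unfolding is_path_def by blast
    have e1: "l ! 0 = take (length l) (drop i' s) ! 0" using i'l(2) by simp
    have e2: "take (length l) (drop i' s) ! 0 = drop i' s ! 0" using lne by simp
    have e3: "drop i' s ! 0 = s ! i'" using ms m by simp
    have "s ! Suc m = hd l" using e1 e2 e3 lne m by (simp add: hd_conv_nth)
    hence c: "collecting E src tgt (tgt (s ! m))" using t sl unfolding symmetric_path_def by simp
    have "s ! m \<in> E" using ps ms unfolding is_path_def by (meson Suc_lessD nth_mem subsetD)
    hence "bk (s ! m) \<noteq> []" using bk_ne[OF RS _ c] by blast
    hence "h m < h i'" unfolding h_def using \<open>take i' s = take m s @ [s ! m]\<close> c by simp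
    moreover have "h i \<le> h m" using mono a(3) m by simp
    ultimately show ?thesis by simp
  qed
  have inj: "inj_on h (occs l s)"
    by (rule linorder_inj_onI') (use strict in fastforce)
  have c4: "occ_count (Fw E src tgt fr l) (Fw E src tgt fr s) \<ge> k \<Longrightarrow> k \<ge> 1 \<Longrightarrow> occ_count l s \<ge> k" for k
    using RS sl ss unfolding rauzy_scheme_def by blast
  have "card (occs (Fw E src tgt fr l) (Fw E src tgt fr s)) \<ge> 1"
  proof -
    have "card (occs (Fw E src tgt fr l) (Fw E src tgt fr s)) > 0"
      using j finite_occs card_gt_0_iff by blast
    thus ?thesis by simp
  qed
  hence "card (occs l s) \<ge> card (occs (Fw E src tgt fr l) (Fw E src tgt fr s))"
    using c4 by (simp add: occ_count_occs)
  hence "card (h ` occs l s) \<ge> card (occs (Fw E src tgt fr l) (Fw E src tgt fr s))"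
    using card_image[OF inj] by simp
  hence "h ` occs l s = occs (Fw E src tgt fr l) (Fw E src tgt fr s)"
    using card_seteq[OF finite_occs img] by blast
  hence "j \<in> h ` occs l s" using j by simp
  then obtain i where "i \<in> occs l s" "j = h i" by blast
  thus ?thesis unfolding h_def by blast
qed



lemma Mbound:
  assumes RS: "rauzy_scheme W V E src tgt fr bk"
  shows "\<exists>M. \<forall>e\<in>E. length (fr e) \<le> M \<and> length (bk e) \<le> M"
proof -
  have fin: "finite E" using RS unfolding rauzy_scheme_def graph_with_words_def by blast
  define M where "M = Max ((\<lambda>e. length (fr e) + length (bk e)) ` E)"
  have "\<forall>e\<in>E. length (fr e) + length (bk e) \<le> M" unfolding M_def using fin by simp
  thus ?thesis by (metis add_leE)
qed

lemma ext_right: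
  assumes RS: "rauzy_scheme W V E src tgt fr bk"
    and adm: "admissible W E src tgt fr l"
    and fu: "factor_inf (Fw E src tgt fr l @ u1) W"
  shows "\<exists>l'. admissible W E src tgt fr l' \<and> prefix l l' \<and>
                  prefix (Fw E src tgt fr l @ u1) (Fw E src tgt fr l')"
proof -
  let ?F = "Fw E src tgt fr" and ?G = "Gw E src tgt fr" and ?H = "Hw E src tgt bk"
  define u where "u = ?F l"
  have sl: "symmetric_path E src tgt l" using adm unfolding admissible_def by blast
  have lne: "l \<noteq> []" using sl unfolding symmetric_path_def is_path_def by blast
  obtain M where M: "\<forall>e\<in>E. length (fr e) \<le> M \<and> length (bk e) \<le> M" using Mbound[OF RS] by blast
  obtain i where iw: "\<forall>k<length (u @ u1). (u @ u1) ! k = W (i + k)"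
    using fu factor_inf_nth unfolding u_def by blast
  define z where "z = map (\<lambda>k. W (i + length (u @ u1) + k)) [0..<M]"
  have lz: "length z = M" unfolding z_def by simp
  have fw: "factor_inf (u @ u1 @ z) W"
  proof -
    have "\<forall>k<length (u @ u1 @ z). (u @ u1 @ z) ! k = W (i + k)"
    proof (intro allI impI)
      fix k assume k: "k < length (u @ u1 @ z)"
      show "(u @ u1 @ z) ! k = W (i + k)"
      proof (cases "k < length (u @ u1)")
        case True thus ?thesis using iw by (metis append.assoc nth_append)
      next
        case False
        hence "(u @ u1 @ z) ! k = z ! (k - length (u @ u1))"
          by (metis append.assoc nth_append)
        also have "\<dots> = W (i + k)"
        proof -
          have "k - length (u @ u1) < M" using False k lz by simp
          thus ?thesis using False unfolding z_def by simp
        qed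
        finally show ?thesis .
      qed
    qed
    thus ?thesis using factor_inf_nth by blast
  qed
  obtain s where ss: "symmetric_path E src tgt s" and sub: "sublist (u @ u1 @ z) (?F s)"
    using RS fw unfolding rauzy_scheme_def by blast
  obtain a b where ab: "?F s = a @ u @ (u1 @ z @ b)" using sub unfolding sublist_def by auto
  have "length a \<in> occs (?F l) (?F s)" unfolding ab u_def by (rule occs_append)
  then obtain i0 where i0: "i0 \<in> occs l s" "length (?H (take i0 s)) = length a"
    using align[OF RS sl ss] by blast
  define q where "q = drop (i0 + length l) s"
  have dec: "?F s = ?H (take i0 s) @ u @ ?G q" using decomp[OF RS sl ss i0(1)] unfolding q_def u_def .
  have "?H (take i0 s) @ (u @ ?G q) = a @ (u @ u1 @ z @ b)" using dec ab by simp
  hence "u @ ?G q = u @ u1 @ z @ b" using append_eq_append_conv i0(2) by blast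
  hence Gq: "?G q = u1 @ z @ b" by simp
  have i0o: "i0 + length l \<le> length s" "take (length l) (drop i0 s) = l"
    using i0(1) unfolding occs_def by auto
  have "q = drop (length l) (drop i0 s)" unfolding q_def by (simp add: add.commute)
  hence lq: "l @ q = drop i0 s" using i0o(2) by (metis append_take_drop_id)
  have sd: "s = take i0 s @ (l @ q)" using lq by simp
  have ps: "is_path E src tgt s" using ss unfolding symmetric_path_def by blast
  have i0s: "i0 < length s" using i0o(1) lne by (cases l) auto
  have plq: "is_path E src tgt (l @ q)" unfolding lq using ps i0s by (rule is_path_drop)
  define f where "f k = length u + length (?G (take k q))" for k
  define D where "D k = distributing E src tgt (tgt (last (l @ take k q)))" for k
  have "\<exists>k\<le>length q. D k \<and> length (u @ u1) \<le> f k \<and> f k \<le> length (u @ u1) + M"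
  proof (rule step_lemma)
    have "last (l @ q) = last s" using sd lne by (metis append_is_Nil_conv last_appendR)
    thus "D (length q)" unfolding D_def using ss unfolding symmetric_path_def by simp
    show "length (u @ u1) \<le> f (length q)" unfolding f_def using Gq by simp
    show "f 0 \<le> length (u @ u1)" unfolding f_def by simp
  next
    fix k assume k: "k < length q"
    have tk: "take (Suc k) q = take k q @ [q ! k]" using k by (simp add: take_Suc_conv_app_nth)
    have "q ! k \<in> set (l @ q)" using k by simp
    hence "q ! k \<in> E" using plq unfolding is_path_def by blast
    hence "length (fr (q ! k)) \<le> M" using M by blast
    thus "f k \<le> f (Suc k) \<and> f (Suc k) \<le> f k + M" unfolding f_def tk by auto
  next
    fix k assume k: "k < length q" and nd: "\<not> D k"
    have tk: "take (Suc k) q = take k q @ [q ! k]" using k by (simp add: take_Suc_conv_app_nth)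
    have "last (l @ take k q) = (l @ q) ! (length l + k - 1)"
      using lne k by (cases k) (auto simp: last_conv_nth nth_append)
    moreover have "tgt ((l @ q) ! (length l + k - 1)) = src ((l @ q) ! Suc (length l + k - 1))"
      using plq k lne unfolding is_path_def by (cases l) auto
    moreover have "(l @ q) ! Suc (length l + k - 1) = q ! k" using lne
      by (cases l) (auto simp: nth_append)
    ultimately have "src (q ! k) = tgt (last (l @ take k q))" by simp
    hence "\<not> distributing E src tgt (src (q ! k))" using nd unfolding D_def by simp
    thus "f (Suc k) = f k" unfolding f_def tk by simp
  qed
  then obtain k where k: "k \<le> length q" "D k" "length (u @ u1) \<le> f k" "f k \<le> length (u @ u1) + M"
    by blast
  define l' where "l' = l @ take k q"
  have l't: "l' = take (length l + k) (l @ q)" unfolding l'_def by simp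
  have pl': "is_path E src tgt l'" unfolding l't using plq lne by (intro is_path_take) auto
  have syml': "symmetric_path E src tgt l'"
    using pl' sl k(2) lne unfolding symmetric_path_def D_def l'_def by simp
  have Fl': "?F l' = u @ ?G (take k q)" unfolding l'_def u_def using Fw_append[OF lne] .
  define x where "x = ?G (take k q)"
  have "?G q = x @ ?G (drop k q)" unfolding x_def by (metis Gw_append append_take_drop_id)
  hence xr: "x @ ?G (drop k q) = u1 @ z @ b" using Gq by simp
  have lx: "length u1 \<le> length x" "length x \<le> length u1 + length z"
    using k(3,4) lz unfolding f_def x_def by auto
  have "x = take (length x) (x @ ?G (drop k q))" by simp
  hence "x = take (length x) (u1 @ z @ b)" using xr by simp
  also have "\<dots> = u1 @ take (length x - length u1) z" using lx by (simp add: take_append)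
  finally have "x = u1 @ take (length x - length u1) z" .
  then obtain d where xe: "x = u1 @ take d z" by blast
  have "prefix (?F l') (u @ u1 @ z)" unfolding Fl' x_def[symmetric] xe
    by (simp add: take_is_prefix)
  hence "factor_inf (?F l') W" using fw factor_inf_sublist by blast
  hence "admissible W E src tgt fr l'" using syml' unfolding admissible_def by blast
  moreover have "prefix l l'" unfolding l'_def by simp
  moreover have "prefix (?F l @ u1) (?F l')" unfolding Fl' x_def[symmetric] xe u_def by simp
  ultimately show ?thesis by blast
qed



lemma ext_left:
  assumes RS: "rauzy_scheme W V E src tgt fr bk" and rec: "recurrent W"
    and adm: "admissible W E src tgt fr l"
    and fu: "factor_inf (u1 @ Fw E src tgt fr l) W"
  shows "\<exists>l'. admissible W E src tgt fr l' \<and> suffix l l' \<and>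
                  suffix (u1 @ Fw E src tgt fr l) (Fw E src tgt fr l')"
proof -
  let ?F = "Fw E src tgt fr" and ?G = "Gw E src tgt fr" and ?H = "Hw E src tgt bk"
  define u where "u = ?F l"
  have sl: "symmetric_path E src tgt l" using adm unfolding admissible_def by blast
  have lne: "l \<noteq> []" using sl unfolding symmetric_path_def is_path_def by blast
  obtain M where M: "\<forall>e\<in>E. length (fr e) \<le> M \<and> length (bk e) \<le> M" using Mbound[OF RS] by blast
  have "infinite {i. map W [i..<i + length (u1 @ u)] = u1 @ u}"
    using rec fu unfolding recurrent_def u_def by blast
  hence "\<exists>n\<ge>M. n \<in> {i. map W [i..<i + length (u1 @ u)] = u1 @ u}"
    unfolding infinite_nat_iff_unbounded_le by blast
  then obtain i where i: "i \<ge> M" "map W [i..<i + length (u1 @ u)] = u1 @ u"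
    by blast
  have iw: "\<forall>k<length (u1 @ u). (u1 @ u) ! k = W (i + k)"
    using i(2) by (metis add_diff_cancel_left' length_map length_upt nth_map_upt)
  define z where "z = map (\<lambda>k. W (i - M + k)) [0..<M]"
  have lz: "length z = M" unfolding z_def by simp
  have fw: "factor_inf (z @ u1 @ u) W"
  proof -
    have "\<forall>k<length (z @ u1 @ u). (z @ u1 @ u) ! k = W (i - M + k)"
    proof (intro allI impI)
      fix k assume k: "k < length (z @ u1 @ u)"
      show "(z @ u1 @ u) ! k = W (i - M + k)"
      proof (cases "k < M")
        case True thus ?thesis unfolding z_def by (simp add: nth_append)
      next
        case False
        hence "(z @ u1 @ u) ! k = (u1 @ u) ! (k - M)" using lz by (simp add: nth_append)
        also have "\<dots> = W (i + (k - M))" using iw k False lz by simp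
        also have "i + (k - M) = i - M + k" using False i(1) by simp
        finally show ?thesis .
      qed
    qed
    thus ?thesis using factor_inf_nth by blast
  qed
  obtain s where ss: "symmetric_path E src tgt s" and sub: "sublist (z @ u1 @ u) (?F s)"
    using RS fw unfolding rauzy_scheme_def by blast
  obtain a b where ab: "?F s = (a @ z @ u1) @ u @ b" using sub unfolding sublist_def by auto
  have "length (a @ z @ u1) \<in> occs (?F l) (?F s)" unfolding ab u_def by (rule occs_append)
  then obtain i0 where i0: "i0 \<in> occs l s" "length (?H (take i0 s)) = length (a @ z @ u1)"
    using align[OF RS sl ss] by blast
  define q where "q = drop (i0 + length l) s"
  define p where "p = take i0 s"
  have dec: "?F s = ?H p @ u @ ?G q" using decomp[OF RS sl ss i0(1)] unfolding q_def u_def p_def .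
  have "?H p @ (u @ ?G q) = (a @ z @ u1) @ (u @ b)" using dec ab by simp
  hence Hp: "?H p = a @ z @ u1" using append_eq_append_conv i0(2) unfolding p_def by blast
  have i0o: "i0 + length l \<le> length s" "take (length l) (drop i0 s) = l"
    using i0(1) unfolding occs_def by auto
  have lp: "length p = i0" unfolding p_def using i0o(1) by simp
  have "q = drop (length l) (drop i0 s)" unfolding q_def by (simp add: add.commute)
  hence lq: "l @ q = drop i0 s" using i0o(2) by (metis append_take_drop_id)
  have sd: "s = p @ l @ q" unfolding p_def lq by simp
  have ps: "is_path E src tgt s" using ss unfolding symmetric_path_def by blast
  define N where "N = i0"
  define f where "f k = length (?H (drop (N - k) p))" for k
  define D where "D k = collecting E src tgt (src (hd (drop (N - k) p @ l)))" for k
  have hdd: "hd (drop n p @ l) = s ! n" if "n \<le> N" for n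
  proof -
    have "drop n s = drop n p @ l @ q" unfolding sd using that lp N_def by simp
    hence "hd (drop n s) = hd (drop n p @ l)" using lne by (cases "drop n p") auto
    moreover have "n < length s" using that i0o(1) lne N_def by (cases l) auto
    ultimately show ?thesis by (simp add: hd_drop_conv_nth)
  qed
  have "\<exists>k\<le>N. D k \<and> length u1 \<le> f k \<and> f k \<le> length u1 + M"
  proof (rule step_lemma)
    have "hd (drop 0 p @ l) = hd s" using hdd[of 0] ps unfolding is_path_def by (simp add: hd_conv_nth)
    thus "D N" unfolding D_def using ss unfolding symmetric_path_def by simp
    show "length u1 \<le> f N" unfolding f_def using Hp by simp
    show "f 0 \<le> length u1" unfolding f_def N_def using lp by simp
  next
    fix k assume k: "k < N"
    define m where "m = N - Suc k"
    have mp: "m < length p" unfolding m_def using k lp N_def by simp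
    have sm: "Suc m = N - k" unfolding m_def using k by simp
    have "drop m p = p ! m # drop (Suc m) p" using Cons_nth_drop_Suc[OF mp] by simp
    hence dr: "drop (N - Suc k) p = p ! m # drop (N - k) p" using sm unfolding m_def by simp
    have "p ! m \<in> set p" using mp by simp
    hence "p ! m \<in> set s" unfolding p_def using set_take_subset by fast
    hence "p ! m \<in> E" using ps unfolding is_path_def by blast
    hence "length (bk (p ! m)) \<le> M" using M by blast
    thus "f k \<le> f (Suc k) \<and> f (Suc k) \<le> f k + M" unfolding f_def dr by auto
  next
    fix k assume k: "k < N" and nd: "\<not> D k"
    define m where "m = N - Suc k"
    have mp: "m < length p" unfolding m_def using k lp N_def by simp
    have sm: "Suc m = N - k" unfolding m_def using k by simp
    have "drop m p = p ! m # drop (Suc m) p" using Cons_nth_drop_Suc[OF mp] by simp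
    hence dr: "drop (N - Suc k) p = p ! m # drop (N - k) p" using sm unfolding m_def by simp
    have pm: "p ! m = s ! m" using mp unfolding p_def by simp
    have "hd (drop (N - k) p @ l) = s ! Suc m" using hdd[of "N - k"] sm by simp
    moreover have "Suc m < length s" using sm i0o(1) lne N_def by (cases l) auto
    ultimately have "tgt (p ! m) = src (hd (drop (N - k) p @ l))"
      using ps pm unfolding is_path_def by simp
    hence "\<not> collecting E src tgt (tgt (p ! m))" using nd unfolding D_def by simp
    thus "f (Suc k) = f k" unfolding f_def dr by simp
  qed
  then obtain k where k: "k \<le> N" "D k" "length u1 \<le> f k" "f k \<le> length u1 + M"
    by blast
  define p' where "p' = drop (N - k) p"
  define l' where "l' = p' @ l"
  have l't: "l' = drop (N - k) (take (N + length l) s)"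
    unfolding l'_def p'_def sd using lp N_def by simp
  have "is_path E src tgt (take (N + length l) s)" using ps lne by (intro is_path_take) auto
  hence pl': "is_path E src tgt l'" unfolding l't
    by (rule is_path_drop) (use i0o(1) lne N_def in \<open>cases l; auto\<close>)
  have syml': "symmetric_path E src tgt l'"
    using pl' sl k(2) lne unfolding symmetric_path_def D_def l'_def p'_def by simp
  have "?F l' = Bw E src tgt bk l'" using FB[OF RS syml'] .
  also have "\<dots> = ?H p' @ Bw E src tgt bk l" unfolding l'_def using Bw_append[OF lne] .
  also have "Bw E src tgt bk l = u" using FB[OF RS sl] unfolding u_def by simp
  finally have Fl': "?F l' = ?H p' @ u" .
  define y where "y = ?H p'"
  define x where "x = ?H (take (N - k) p)"
  have "?H p = x @ y" unfolding x_def y_def p'_def by (metis Hw_append append_take_drop_id)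
  hence xy: "x @ y = a @ z @ u1" using Hp by simp
  have ly: "length u1 \<le> length y" "length y \<le> length u1 + length z"
    using k(3,4) lz unfolding f_def y_def p'_def by auto
  have "y = drop (length x) (x @ y)" by simp
  hence "y = drop (length x) (a @ z @ u1)" using xy by simp
  moreover have "length x = length a + (length z + length u1 - length y)"
  proof -
    have "length x + length y = length a + length z + length u1" using arg_cong[OF xy, of length] by simp
    thus ?thesis using ly by linarith
  qed
  ultimately have "y = drop (length z + length u1 - length y) z @ u1" using ly by simp
  then obtain d where ye: "y = drop d z @ u1" by blast
  have "suffix (?F l') (z @ u1 @ u)" unfolding Fl' y_def[symmetric] ye
    by (simp add: suffix_drop)
  hence "factor_inf (?F l') W" using fw factor_inf_sublist by blast
  hence "admissible W E src tgt fr l'" using syml' unfolding admissible_def by blast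
  moreover have "suffix l l'" unfolding l'_def suffix_def by blast
  moreover have "suffix (u1 @ ?F l) (?F l')" unfolding Fl' y_def[symmetric] ye u_def unfolding suffix_def by (intro exI[of _ "drop d z"]) simp
  ultimately show ?thesis by blast
qed

theorem lemma3p5:
  fixes W :: "nat \<Rightarrow> 'a" and V :: "'v set" and E :: "'e set"
    and src tgt :: "'e \<Rightarrow> 'v" and fr bk :: "'e \<Rightarrow> 'a list"
    and l :: "'e list" and u u1 :: "'a list"
  assumes "recurrent W"
    and "rauzy_scheme W V E src tgt fr bk"
    and "admissible W E src tgt fr l"
    and "Fw E src tgt fr l = u"
  shows "(factor_inf (u @ u1) W \<longrightarrow>
            (\<exists>l'. admissible W E src tgt fr l' \<and> prefix l l' \<and>
                  prefix (u @ u1) (Fw E src tgt fr l')))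
       \<and> (factor_inf (u1 @ u) W \<longrightarrow>
            (\<exists>l'. admissible W E src tgt fr l' \<and> suffix l l' \<and>
                  suffix (u1 @ u) (Fw E src tgt fr l')))"
proof -
  have sl: "admissible W E src tgt fr l" by (rule assms(3))
  show ?thesis
    using ext_right[OF assms(2) assms(3), of u1] ext_left[OF assms(2) assms(1) assms(3), of u1] assms(4)
    by blast
qed

end
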